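(* Let $\mathcal D=(A,D)$ be a dependence alphabet and suppose there are letters $a,b,c,d\in A$ with $a\neq b$, $(a,b)\in D$, and $c\parallel d$. Then there exist an lc-rational relation $\mathcal R\subseteq\mathbb M(\mathcal D)^2$, a rational set $\mathcal K\subseteq\mathbb M(\mathcal D)$ and a recognizable set $\mathcal L\subseteq\mathbb M(\mathcal D)$ such that ${}^{\mathcal R}\mathcal K$ is not rational and $\mathcal L^{\mathcal R}$ is not recognizable.
   Context: A dependence alphabet is $\mathcal D=(A,D)$, $A$ finite, $D\subseteq A\times A$ reflexive and symmetric; letters $x,y$ are independent if $(x,y)\notin D$, and $c\parallel d$ means $c,d$ are independent. $\sim$ is the least congruence on $A^*$ with $xy\sim yx$ for independent $x,y$; $\mathbb M(\mathcal D)=A^*/{\sim}$, $[w]$ the class of $w$, $[L]=\{[u]\mid u\in L\}$, $[R]=\{([u],[v])\mid(u,v)\in R\}$. A trace language $\mathcal K$ is recognizable if $\{u\mid[u]\in\mathcal K\}$ is regular, rational if $\mathcal K=[L]$ for a regular $L$. A word relation $R$ is left-closed if $u\sim u'$, $(u',v')\in R$ imply some $v$ with $(u,v)\in R$, $v\sim v'$; a trace relation is lc-rational if it equals $[R]$ for a left-closed rational word relation $R$. $\mathcal L^{\mathcal R}=\{y\mid\exists x\in\mathcal L:(x,y)\in\mathcal R\}$ and ${}^{\mathcal R}\mathcal L=\{x\mid\exists y\in\mathcal L:(x,y)\in\mathcal R\}$. *)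

theory Defs
  imports Main
begin

definition dep_alphabet :: "'a set \<Rightarrow> ('a \<times> 'a) set \<Rightarrow> bool" where
  "dep_alphabet A D \<longleftrightarrow> finite A \<and> D \<subseteq> A \<times> A \<and> (\<forall>x\<in>A. (x, x) \<in> D) \<and> sym D"

definition swap_step :: "'a set \<Rightarrow> ('a \<times> 'a) set \<Rightarrow> 'a list \<Rightarrow> 'a list \<Rightarrow> bool" where
  "swap_step A D u v \<longleftrightarrow> (\<exists>p s x y. x \<in> A \<and> y \<in> A \<and> (x, y) \<notin> D \<and>
       u = p @ [x, y] @ s \<and> v = p @ [y, x] @ s)"

text \<open>Trace equivalence: the least congruence with xy ~ yx for independent x, y
  (the reflexive-symmetric-transitive closure of the commutation steps).\<close>
definition trace_eq :: "'a set \<Rightarrow> ('a \<times> 'a) set \<Rightarrow> 'a list \<Rightarrow> 'a list \<Rightarrow> bool" where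
  "trace_eq A D = (sup (swap_step A D) (swap_step A D)\<inverse>\<inverse>)\<^sup>*\<^sup>*"

definition trace :: "'a set \<Rightarrow> ('a \<times> 'a) set \<Rightarrow> 'a list \<Rightarrow> 'a list set" where
  "trace A D w = {v. trace_eq A D w v}"

definition traces :: "'a set \<Rightarrow> ('a \<times> 'a) set \<Rightarrow> 'a list set set" where
  "traces A D = trace A D ` lists A"

inductive regular :: "'a set \<Rightarrow> 'a list set \<Rightarrow> bool" for A where
  fin: "finite L \<Longrightarrow> L \<subseteq> lists A \<Longrightarrow> regular A L"
| union: "regular A L1 \<Longrightarrow> regular A L2 \<Longrightarrow> regular A (L1 \<union> L2)"
| conc: "regular A L1 \<Longrightarrow> regular A L2 \<Longrightarrow> regular A {u @ v | u v. u \<in> L1 \<and> v \<in> L2}"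
| star: "regular A L \<Longrightarrow> regular A {concat ws | ws. set ws \<subseteq> L}"

inductive rat_rel :: "'a set \<Rightarrow> ('a list \<times> 'a list) set \<Rightarrow> bool" for A where
  fin: "finite R \<Longrightarrow> R \<subseteq> lists A \<times> lists A \<Longrightarrow> rat_rel A R"
| union: "rat_rel A R1 \<Longrightarrow> rat_rel A R2 \<Longrightarrow> rat_rel A (R1 \<union> R2)"
| conc: "rat_rel A R1 \<Longrightarrow> rat_rel A R2 \<Longrightarrow>
     rat_rel A {(u1 @ u2, v1 @ v2) | u1 u2 v1 v2. (u1, v1) \<in> R1 \<and> (u2, v2) \<in> R2}"
| star: "rat_rel A R \<Longrightarrow>
     rat_rel A {(concat (map fst ps), concat (map snd ps)) | ps. set ps \<subseteq> R}"

definition recognizable_tr :: "'a set \<Rightarrow> ('a \<times> 'a) set \<Rightarrow> 'a list set set \<Rightarrow> bool" where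
  "recognizable_tr A D K \<longleftrightarrow> K \<subseteq> traces A D \<and> regular A {u \<in> lists A. trace A D u \<in> K}"

definition rational_tr :: "'a set \<Rightarrow> ('a \<times> 'a) set \<Rightarrow> 'a list set set \<Rightarrow> bool" where
  "rational_tr A D K \<longleftrightarrow> (\<exists>L. regular A L \<and> K = trace A D ` L)"

definition left_closed :: "'a set \<Rightarrow> ('a \<times> 'a) set \<Rightarrow> ('a list \<times> 'a list) set \<Rightarrow> bool" where
  "left_closed A D R \<longleftrightarrow> (\<forall>u u' v'. trace_eq A D u u' \<and> (u', v') \<in> R \<longrightarrow>
       (\<exists>v. (u, v) \<in> R \<and> trace_eq A D v v'))"

definition lc_rational :: "'a set \<Rightarrow> ('a \<times> 'a) set \<Rightarrow> ('a list set \<times> 'a list set) set \<Rightarrow> bool" where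
  "lc_rational A D \<R> \<longleftrightarrow> (\<exists>R. rat_rel A R \<and> left_closed A D R \<and>
       \<R> = {(trace A D u, trace A D v) | u v. (u, v) \<in> R})"

definition rel_image :: "'t set \<Rightarrow> ('t \<times> 't) set \<Rightarrow> 't set" where
  "rel_image L R = {y. \<exists>x\<in>L. (x, y) \<in> R}"

definition rel_preimage :: "('t \<times> 't) set \<Rightarrow> 't set \<Rightarrow> 't set" where
  "rel_preimage R K = {x. \<exists>y\<in>K. (x, y) \<in> R}"

end

theory Submission imports Defs "HOL-Library.Multiset" begin

lemma te_refl: "trace_eq A D u u"
  unfolding trace_eq_def by simp

lemma te_sym: "trace_eq A D u v \<Longrightarrow> trace_eq A D v u"
  unfolding trace_eq_def
proof (induction rule: rtranclp.induct)
  case (rtrancl_refl a) then show ?case by simp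
next
  case (rtrancl_into_rtrancl a b c)
  have "(sup (swap_step A D) (swap_step A D)\<inverse>\<inverse>) c b" using rtrancl_into_rtrancl(2) by auto
  then show ?case using rtrancl_into_rtrancl(3) by (rule converse_rtranclp_into_rtranclp)
qed

lemma te_trans: "trace_eq A D u v \<Longrightarrow> trace_eq A D v w \<Longrightarrow> trace_eq A D u w"
  unfolding trace_eq_def by (rule rtranclp_trans)

lemma trace_eq_iff: "trace A D u = trace A D v \<longleftrightarrow> trace_eq A D u v"
proof
  assume "trace A D u = trace A D v"
  then have "v \<in> trace A D u" using te_refl[of A D v] unfolding trace_def by blast
  then show "trace_eq A D u v" unfolding trace_def by simp
next
  assume h: "trace_eq A D u v"
  show "trace A D u = trace A D v" unfolding trace_def
    using h te_sym[OF h] te_trans by blast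
qed

lemma te_mset: "trace_eq A D u v \<Longrightarrow> mset u = mset v"
  unfolding trace_eq_def
  by (induction rule: rtranclp.induct) (auto simp: swap_step_def)

lemma swap_cong: "swap_step A D v w \<Longrightarrow> swap_step A D (p@v@s) (p@w@s)"
proof -
  assume "swap_step A D v w"
  then obtain q r x y where h: "x \<in> A" "y \<in> A" "(x, y) \<notin> D" "v = q @ [x, y] @ r" "w = q @ [y, x] @ r"
    unfolding swap_step_def by blast
  show ?thesis unfolding swap_step_def
    by (rule exI[of _ "p@q"], rule exI[of _ "r@s"], rule exI[of _ x], rule exI[of _ y]) (simp add: h)
qed

lemma te_cong: "trace_eq A D u v \<Longrightarrow> trace_eq A D (p@u@s) (p@v@s)"
  unfolding trace_eq_def
proof (induction rule: rtranclp.induct)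
  case (rtrancl_refl a) then show ?case by simp
next
  case (rtrancl_into_rtrancl a b c)
  have h: "(sup (swap_step A D) (swap_step A D)\<inverse>\<inverse>) (p@b@s) (p@c@s)"
    using rtrancl_into_rtrancl(2) swap_cong by fastforce
  show ?case by (rule rtranclp.rtrancl_into_rtrancl[OF rtrancl_into_rtrancl(3) h])
qed

lemma te_ab:
  assumes "set u \<subseteq> {a, b}" "(a,a) \<in> D" "(b,b) \<in> D" "(a,b) \<in> D" "(b,a) \<in> D"
    and "trace_eq A D u v"
  shows "v = u"
  using assms(6) unfolding trace_eq_def
proof (induction rule: rtranclp_induct)
  case base then show ?case by simp
next
  case (step y z)
  then have "y = u" by simp
  have nd: "\<And>p x y s. u = p @ [x, y] @ s \<Longrightarrow> (x, y) \<in> D"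
  proof -
    fix p x y s assume "u = p @ [x, y] @ s"
    then have "x \<in> {a,b}" "y \<in> {a,b}" using assms(1) by auto
    then show "(x, y) \<in> D" using assms(2-5) by auto
  qed
  from step(2) \<open>y = u\<close> have "swap_step A D u z \<or> swap_step A D z u" by auto
  then show ?case
  proof
    assume "swap_step A D u z" then show ?thesis unfolding swap_step_def using nd by blast
  next
    assume "swap_step A D z u"
    then obtain p s x y where "(x, y) \<notin> D" "u = p @ [y, x] @ s" unfolding swap_step_def by blast
    moreover have "x \<in> {a,b}" "y \<in> {a,b}" using assms(1) calculation(2) by auto
    ultimately show ?thesis using assms(2-5) by auto
  qed
qed

definition pump :: "'a list set \<Rightarrow> nat \<Rightarrow> bool" where
  "pump L N \<longleftrightarrow> (\<forall>w\<in>L. N \<le> length w \<longrightarrow>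
     (\<exists>x y z. w = x @ y @ z \<and> y \<noteq> [] \<and> length (x @ y) \<le> N \<and> x @ y @ y @ z \<in> L))"

lemma star_pump:
  assumes "pump L N"
  shows "set ws \<subseteq> L \<Longrightarrow> concat ws \<noteq> [] \<Longrightarrow>
     (\<exists>x y z. concat ws = x @ y @ z \<and> y \<noteq> [] \<and> length (x @ y) \<le> N \<and>
        x @ y @ y @ z \<in> {concat ws | ws. set ws \<subseteq> L})"
proof (induction ws)
  case Nil then show ?case by simp
next
  case (Cons u ws)
  show ?case
  proof (cases "u = []")
    case True
    then obtain x y z where h: "concat ws = x @ y @ z" "y \<noteq> []" "length (x @ y) \<le> N"
       "x @ y @ y @ z \<in> {concat ws | ws. set ws \<subseteq> L}" using Cons by auto
    then show ?thesis using True by auto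
  next
    case False
    show ?thesis
    proof (cases "N \<le> length u")
      case True
      have "u \<in> L" using Cons.prems by simp
      then have "\<exists>x y z. u = x @ y @ z \<and> y \<noteq> [] \<and> length (x @ y) \<le> N \<and> x @ y @ y @ z \<in> L"
        using assms True unfolding pump_def by blast
      then obtain x y z where h: "u = x @ y @ z" "y \<noteq> []" "length (x @ y) \<le> N" "x @ y @ y @ z \<in> L"
        by blast
      have "x @ y @ y @ (z @ concat ws) = concat ((x @ y @ y @ z) # ws)" by simp
      moreover have "set ((x @ y @ y @ z) # ws) \<subseteq> L" using h Cons.prems by auto
      ultimately have "x @ y @ y @ (z @ concat ws) \<in> {concat ws | ws. set ws \<subseteq> L}" by blast
      then show ?thesis using h by (intro exI[of _ x] exI[of _ y] exI[of _ "z @ concat ws"]) auto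
    next
      case F2: False
      have "u @ u @ concat ws = concat (u # u # ws)" by simp
      moreover have "set (u # u # ws) \<subseteq> L" using Cons.prems by auto
      ultimately have "[] @ u @ u @ concat ws \<in> {concat ws | ws. set ws \<subseteq> L}" by (simp only: append_Nil) blast
      then show ?thesis using F2 False by (intro exI[of _ "[]"] exI[of _ u] exI[of _ "concat ws"]) auto
    qed
  qed
qed

lemma regular_pump: "regular A L \<Longrightarrow> \<exists>N. pump L N"
proof (induction rule: regular.induct)
  case (fin L)
  have "pump L (Suc (Max (insert 0 (length ` L))))"
    unfolding pump_def
  proof (intro ballI impI)
    fix w assume "w \<in> L" "Suc (Max (insert 0 (length ` L))) \<le> length w"
    moreover have "length w \<le> Max (insert 0 (length ` L))" using fin(1) \<open>w \<in> L\<close> by simp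
    ultimately show "\<exists>x y z. w = x @ y @ z \<and> y \<noteq> [] \<and> length (x @ y) \<le> Suc (Max (insert 0 (length ` L))) \<and> x @ y @ y @ z \<in> L" by simp
  qed
  then show ?case by blast
next
  case (union L1 L2)
  then obtain N1 N2 where "pump L1 N1" "pump L2 N2" by blast
  then have "pump (L1 \<union> L2) (N1 + N2)" unfolding pump_def
  proof (intro ballI impI)
    fix w assume p: "\<forall>w\<in>L1. N1 \<le> length w \<longrightarrow> (\<exists>x y z. w = x @ y @ z \<and> y \<noteq> [] \<and> length (x @ y) \<le> N1 \<and> x @ y @ y @ z \<in> L1)"
      "\<forall>w\<in>L2. N2 \<le> length w \<longrightarrow> (\<exists>x y z. w = x @ y @ z \<and> y \<noteq> [] \<and> length (x @ y) \<le> N2 \<and> x @ y @ y @ z \<in> L2)"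
      and w: "w \<in> L1 \<union> L2" "N1 + N2 \<le> length w"
    show "\<exists>x y z. w = x @ y @ z \<and> y \<noteq> [] \<and> length (x @ y) \<le> N1 + N2 \<and> x @ y @ y @ z \<in> L1 \<union> L2"
    proof (cases "w \<in> L1")
      case True
      then obtain x y z where "w = x @ y @ z" "y \<noteq> []" "length (x @ y) \<le> N1" "x @ y @ y @ z \<in> L1"
        using p(1) w(2) by (meson add_leD1)
      then show ?thesis by (intro exI[of _ x] exI[of _ y] exI[of _ z]) auto
    next
      case False
      then have "w \<in> L2" using w(1) by blast
      then obtain x y z where "w = x @ y @ z" "y \<noteq> []" "length (x @ y) \<le> N2" "x @ y @ y @ z \<in> L2"
        using p(2) w(2) by (meson add_leD2)
      then show ?thesis by (intro exI[of _ x] exI[of _ y] exI[of _ z]) auto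
    qed
  qed
  then show ?case by blast
next
  case (conc L1 L2)
  then obtain N1 N2 where p1: "pump L1 N1" and p2: "pump L2 N2" by blast
  have "pump {u @ v | u v. u \<in> L1 \<and> v \<in> L2} (N1 + N2)" unfolding pump_def
  proof (intro ballI impI)
    fix w assume "w \<in> {u @ v | u v. u \<in> L1 \<and> v \<in> L2}" and len: "N1 + N2 \<le> length w"
    then obtain u v where uv: "w = u @ v" "u \<in> L1" "v \<in> L2" by blast
    show "\<exists>x y z. w = x @ y @ z \<and> y \<noteq> [] \<and> length (x @ y) \<le> N1 + N2 \<and> x @ y @ y @ z \<in> {u @ v | u v. u \<in> L1 \<and> v \<in> L2}"
    proof (cases "N1 \<le> length u")
      case True
      have "\<exists>x y z. u = x @ y @ z \<and> y \<noteq> [] \<and> length (x @ y) \<le> N1 \<and> x @ y @ y @ z \<in> L1"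
        using p1 uv(2) True unfolding pump_def by blast
      then obtain x y z where h: "u = x @ y @ z" "y \<noteq> []" "length (x @ y) \<le> N1" "x @ y @ y @ z \<in> L1"
        by blast
      have "x @ y @ y @ (z @ v) = (x @ y @ y @ z) @ v" by simp
      then have m: "x @ y @ y @ (z @ v) \<in> {u @ v | u v. u \<in> L1 \<and> v \<in> L2}" using h(4) uv(3) by blast
      have e: "w = x @ y @ (z @ v)" using h(1) uv(1) by simp
      have l: "length (x @ y) \<le> N1 + N2" using h(3) by simp
      show ?thesis by (intro exI[of _ x] exI[of _ y] exI[of _ "z @ v"] conjI e h(2) l m)
    next
      case False
      then have "N2 \<le> length v" using len uv by simp
      then have "\<exists>x y z. v = x @ y @ z \<and> y \<noteq> [] \<and> length (x @ y) \<le> N2 \<and> x @ y @ y @ z \<in> L2"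
        using p2 uv(3) unfolding pump_def by blast
      then obtain x y z where h: "v = x @ y @ z" "y \<noteq> []" "length (x @ y) \<le> N2" "x @ y @ y @ z \<in> L2"
        by blast
      have "(u @ x) @ y @ y @ z = u @ (x @ y @ y @ z)" by simp
      then have m: "(u @ x) @ y @ y @ z \<in> {u @ v | u v. u \<in> L1 \<and> v \<in> L2}" using h(4) uv(2) by blast
      have e: "w = (u @ x) @ y @ z" using h(1) uv(1) by simp
      have l: "length ((u @ x) @ y) \<le> N1 + N2" using h(3) False by simp
      show ?thesis by (intro exI[of _ "u @ x"] exI[of _ y] exI[of _ z] conjI e h(2) l m)
    qed
  qed
  then show ?case by blast
next
  case (star L)
  then obtain N where p: "pump L N" by blast
  have "pump {concat ws | ws. set ws \<subseteq> L} (Suc N)" unfolding pump_def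
  proof (intro ballI impI)
    fix w assume "w \<in> {concat ws | ws. set ws \<subseteq> L}" and len: "Suc N \<le> length w"
    then obtain ws where ws: "w = concat ws" "set ws \<subseteq> L" by blast
    have "w \<noteq> []" using len by auto
    then have "concat ws \<noteq> []" using ws(1) by blast
    from star_pump[OF p ws(2) this] obtain x y z where h: "concat ws = x @ y @ z" "y \<noteq> []"
      "length (x @ y) \<le> N" "x @ y @ y @ z \<in> {concat ws | ws. set ws \<subseteq> L}" by blast
    have e: "w = x @ y @ z" using h(1) ws(1) by simp
    have l: "length (x @ y) \<le> Suc N" using h(3) by simp
    show "\<exists>x y z. w = x @ y @ z \<and> y \<noteq> [] \<and> length (x @ y) \<le> Suc N \<and> x @ y @ y @ z \<in> {concat ws | ws. set ws \<subseteq> L}"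
      by (intro exI[of _ x] exI[of _ y] exI[of _ z] conjI e h(2) l h(4))
  qed
  then show ?case by blast
qed


lemma concat_rep_single: "concat (replicate n [x]) = replicate n x"
  by (induction n) auto

lemma rep_of_set: "set ys \<subseteq> {p} \<Longrightarrow> ys = replicate (length ys) p"
  by (induction ys) auto

lemma star_single_rel: "{(concat (map fst ps), concat (map snd ps)) | ps. set ps \<subseteq> {(x, y)}}
   = {(concat (replicate n x), concat (replicate n y)) | n. True}"
proof (intro equalityI subsetI)
  fix q assume "q \<in> {(concat (map fst ps), concat (map snd ps)) | ps. set ps \<subseteq> {(x, y)}}"
  then obtain ps where ps: "q = (concat (map fst ps), concat (map snd ps))" "set ps \<subseteq> {(x, y)}" by blast
  have "ps = replicate (length ps) (x, y)" by (rule rep_of_set[OF ps(2)])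
  then have "q = (concat (replicate (length ps) x), concat (replicate (length ps) y))"
    using ps(1) by (metis fst_conv map_replicate snd_conv)
  then show "q \<in> {(concat (replicate n x), concat (replicate n y)) | n. True}" by blast
next
  fix q assume "q \<in> {(concat (replicate n x), concat (replicate n y)) | n. True}"
  then obtain n where q: "q = (concat (replicate n x), concat (replicate n y))" by blast
  show "q \<in> {(concat (map fst ps), concat (map snd ps)) | ps. set ps \<subseteq> {(x, y)}}"
    unfolding q by (intro CollectI exI[of _ "replicate n (x, y)"]) (simp add: set_replicate_conv_if)
qed

lemma star_single_lang: "{concat ws | ws. set ws \<subseteq> {w}} = {concat (replicate n w) | n. True}"
proof (intro equalityI subsetI)
  fix q assume "q \<in> {concat ws | ws. set ws \<subseteq> {w}}"
  then obtain ws where ws: "q = concat ws" "set ws \<subseteq> {w}" by blast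
  have "ws = replicate (length ws) w" by (rule rep_of_set[OF ws(2)])
  then have "q = concat (replicate (length ws) w)" using ws(1) by simp
  then show "q \<in> {concat (replicate n w) | n. True}" by blast
next
  fix q assume "q \<in> {concat (replicate n w) | n. True}"
  then obtain n where q: "q = concat (replicate n w)" by blast
  show "q \<in> {concat ws | ws. set ws \<subseteq> {w}}"
    unfolding q by (intro CollectI exI[of _ "replicate n w"]) (simp add: set_replicate_conv_if)
qed

lemma pump_contra:
  assumes "x @ y @ z = replicate N p @ replicate N q" "y \<noteq> []" "length (x @ y) \<le> N"
  shows "\<exists>k>0. k \<le> N \<and> (\<forall>r. count (mset (x @ y @ y @ z)) r =
     (if r = p then N + k else 0) + (if r = q then N else 0))"
proof -
  have "x @ y = take (length (x @ y)) (x @ y @ z)" by simp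
  also have "\<dots> = replicate (length (x @ y)) p" using assms(1,3) by (simp add: take_append)
  finally have "set (x @ y) = set (replicate (length (x @ y)) p)" by simp
  then have "set y \<subseteq> {p}" by (auto split: if_splits)
  then have yr: "y = replicate (length y) p" by (rule rep_of_set)
  have "count (mset (x @ y @ y @ z)) r = 
     (if r = p then N + length y else 0) + (if r = q then N else 0)" for r
  proof -
    have "count (mset (x @ y @ y @ z)) r = count (mset (x @ y @ z)) r + count (mset y) r" by simp
    also have "\<dots> = (if r = p then N + length y else 0) + (if r = q then N else 0)"
      by (subst yr, subst assms(1)) (simp del: length_replicate)
    finally show ?thesis .
  qed
  then show ?thesis using assms(2,3) by (intro exI[of _ "length y"]) auto
qed


theorem lemma4p17:
  fixes A :: "'a set" and D :: "('a \<times> 'a) set" and a b c d :: 'a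
  assumes "dep_alphabet A D"
    and "a \<in> A" "b \<in> A" "c \<in> A" "d \<in> A"
    and "a \<noteq> b" "(a, b) \<in> D" "(c, d) \<notin> D"
  shows "\<exists>\<R> K L. lc_rational A D \<R> \<and> rational_tr A D K \<and> recognizable_tr A D L \<and>
           \<not> rational_tr A D (rel_preimage \<R> K) \<and> \<not> recognizable_tr A D (rel_image L \<R>)"
proof -
  note dep = assms(1)[unfolded dep_alphabet_def]
  have aa: "(a,a) \<in> D" and bb: "(b,b) \<in> D" and cc: "(c,c) \<in> D" using dep assms(2-5) by auto
  have ba: "(b,a) \<in> D" using dep assms(7) by (meson symD)
  have cd: "c \<noteq> d" using cc assms(8) by auto
  have ab: "a \<noteq> b" by (rule assms(6))
  have tab: "\<And>u v. set u \<subseteq> {a, b} \<Longrightarrow> trace_eq A D u v \<Longrightarrow> v = u"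
    using te_ab[OF _ aa bb assms(7) ba] by blast
  have trab: "\<And>u v. set u \<subseteq> {a, b} \<Longrightarrow> trace A D v = trace A D u \<Longrightarrow> v = u"
    using tab trace_eq_iff te_sym by metis
  define cdw where "cdw n = concat (replicate n [c, d])" for n
  have cdw_count: "\<And>n r. count (mset (cdw n)) r = (if r = c then n else 0) + (if r = d then n else 0)"
  proof -
    fix n r show "count (mset (cdw n)) r = (if r = c then n else 0) + (if r = d then n else 0)"
      unfolding cdw_def by (induction n) auto
  qed
  have dc: "\<And>n. trace_eq A D (d # replicate n c) (replicate n c @ [d])"
  proof -
    fix n show "trace_eq A D (d # replicate n c) (replicate n c @ [d])"
    proof (induction n)
      case 0 then show ?case by (simp add: te_refl)
    next
      case (Suc n)
      have "swap_step A D (c # d # replicate n c) (d # c # replicate n c)"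
        unfolding swap_step_def using assms(4,5,8)
        by (intro exI[of _ "[]"] exI[of _ "replicate n c"] exI[of _ c] exI[of _ d]) simp
      then have s1: "trace_eq A D (d # c # replicate n c) (c # d # replicate n c)"
        unfolding trace_eq_def by (intro r_into_rtranclp) simp
      have s2: "trace_eq A D ([c] @ (d # replicate n c) @ []) ([c] @ (replicate n c @ [d]) @ [])"
        by (rule te_cong[OF Suc.IH])
      have s2': "trace_eq A D (c # d # replicate n c) (c # replicate n c @ [d])" using s2 by simp
      show ?case using te_trans[OF s1 s2'] by simp
    qed
  qed
  have cdw_eq: "\<And>n. trace_eq A D (cdw n) (replicate n c @ replicate n d)"
  proof -
    fix n show "trace_eq A D (cdw n) (replicate n c @ replicate n d)"
    proof (induction n)
      case 0 then show ?case by (simp add: te_refl cdw_def)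
    next
      case (Suc n)
      have s1: "trace_eq A D ([c, d] @ cdw n @ []) ([c, d] @ (replicate n c @ replicate n d) @ [])"
        by (rule te_cong[OF Suc.IH])
      have s2: "trace_eq A D ([c] @ (d # replicate n c) @ replicate n d) ([c] @ (replicate n c @ [d]) @ replicate n d)"
        by (rule te_cong[OF dc])
      have s1': "trace_eq A D (cdw (Suc n)) (c # d # replicate n c @ replicate n d)"
        using s1 by (simp add: cdw_def)
      have s2': "trace_eq A D (c # d # replicate n c @ replicate n d) (c # replicate n c @ d # replicate n d)"
        using s2 by simp
      show ?case using te_trans[OF s1' s2'] by (simp add: replicate_append_same)
    qed
  qed
  define R0 where "R0 = {(replicate i a @ replicate j b, replicate i c @ replicate j d) | i j. True}"
  define R1 where "R1 = {(replicate n a, cdw n) | n. True}"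
  define Rw where "Rw = R0 \<union> R1"
  define RR where "RR = {(trace A D u, trace A D v) | u v. (u, v) \<in> Rw}"
  define Lk where "Lk = {cdw n | n. True}"
  define K where "K = trace A D ` Lk"
  define La where "La = {replicate n a | n. True}"
  define L where "L = trace A D ` La"
  have Rw_ab: "\<And>u v. (u, v) \<in> Rw \<Longrightarrow> set u \<subseteq> {a, b}"
    unfolding Rw_def R0_def R1_def by auto
  have rat: "rat_rel A Rw"
  proof -
    have f1: "rat_rel A {([a], [c])}" using assms by (intro rat_rel.fin) auto
    have f2: "rat_rel A {([b], [d])}" using assms by (intro rat_rel.fin) auto
    have f3: "rat_rel A {([a], [c, d])}" using assms by (intro rat_rel.fin) auto
    have s1: "rat_rel A {(replicate n a, replicate n c) | n. True}"
      using rat_rel.star[OF f1] unfolding star_single_rel by (simp add: concat_rep_single)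
    have s2: "rat_rel A {(replicate n b, replicate n d) | n. True}"
      using rat_rel.star[OF f2] unfolding star_single_rel by (simp add: concat_rep_single)
    have s3: "rat_rel A R1"
      using rat_rel.star[OF f3] unfolding star_single_rel R1_def cdw_def by (simp add: concat_rep_single)
    have "{(u1 @ u2, v1 @ v2) | u1 u2 v1 v2. (u1, v1) \<in> {(replicate n a, replicate n c) | n. True}
         \<and> (u2, v2) \<in> {(replicate n b, replicate n d) | n. True}} = R0"
      unfolding R0_def by blast
    then have "rat_rel A R0" using rat_rel.conc[OF s1 s2] by simp
    then show ?thesis unfolding Rw_def using s3 by (rule rat_rel.union)
  qed
  have lc: "left_closed A D Rw" unfolding left_closed_def
  proof (intro allI impI)
    fix u u' v' assume h: "trace_eq A D u u' \<and> (u', v') \<in> Rw"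
    then have "u = u'" using tab[OF Rw_ab] te_sym by blast
    then show "\<exists>v. (u, v) \<in> Rw \<and> trace_eq A D v v'" using h te_refl by blast
  qed
  have G1: "lc_rational A D RR" unfolding lc_rational_def RR_def using rat lc by blast
  have G2: "rational_tr A D K"
  proof -
    have "regular A {concat ws | ws. set ws \<subseteq> {[c, d]}}"
      using assms by (intro regular.star regular.fin) auto
    then have "regular A Lk" unfolding star_single_lang Lk_def cdw_def by simp
    then show ?thesis unfolding rational_tr_def K_def by blast
  qed
  have G3: "recognizable_tr A D L"
  proof -
    have "L \<subseteq> traces A D" unfolding L_def La_def traces_def using assms(2) by auto
    moreover have "{u \<in> lists A. trace A D u \<in> L} = La"
    proof (intro equalityI subsetI)
      fix u assume "u \<in> {u \<in> lists A. trace A D u \<in> L}"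
      then obtain n where "trace A D u = trace A D (replicate n a)" unfolding L_def La_def by auto
      then have "u = replicate n a" by (rule trab[rotated]) auto
      then show "u \<in> La" unfolding La_def by blast
    next
      fix u assume "u \<in> La"
      then show "u \<in> {u \<in> lists A. trace A D u \<in> L}" unfolding L_def La_def using assms(2) by auto
    qed
    moreover have "regular A {concat ws | ws. set ws \<subseteq> {[a]}}"
      using assms by (intro regular.star regular.fin) auto
    then have "regular A La" unfolding star_single_lang La_def by (simp add: concat_rep_single)
    ultimately show ?thesis unfolding recognizable_tr_def by simp
  qed
  have G4: "\<not> rational_tr A D (rel_preimage RR K)"
  proof
    assume "rational_tr A D (rel_preimage RR K)"
    then obtain L' where L': "regular A L'" "rel_preimage RR K = trace A D ` L'"
      unfolding rational_tr_def by blast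
    have inP: "\<And>w. w \<in> L' \<Longrightarrow> (\<exists>n. w = replicate n a @ replicate n b) \<or> (\<exists>n. w = replicate n a)"
    proof -
      fix w assume "w \<in> L'"
      then have "trace A D w \<in> rel_preimage RR K" using L'(2) by blast
      then obtain yy where yy: "yy \<in> K" "(trace A D w, yy) \<in> RR"
        unfolding rel_preimage_def by blast
      from yy(1) obtain m where m: "yy = trace A D (cdw m)" unfolding K_def Lk_def by blast
      from yy(2) obtain u v where uv0: "trace A D w = trace A D u" "yy = trace A D v" "(u, v) \<in> Rw"
        unfolding RR_def by blast
      have uv: "trace A D w = trace A D u" "trace A D v = trace A D (cdw m)" "(u, v) \<in> Rw"
        using uv0 m by simp_all
      have "w = u" using trab[OF Rw_ab[OF uv(3)] uv(1)] .
      have "trace_eq A D v (cdw m)" using uv(2) by (simp add: trace_eq_iff)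
      then have mv: "mset v = mset (cdw m)" by (rule te_mset)
      show "(\<exists>n. w = replicate n a @ replicate n b) \<or> (\<exists>n. w = replicate n a)"
        using uv(3) unfolding Rw_def
      proof
        assume "(u, v) \<in> R0"
        then obtain i j where ij: "u = replicate i a @ replicate j b" "v = replicate i c @ replicate j d"
          unfolding R0_def by blast
        have "count (mset v) c = count (mset (cdw m)) c" "count (mset v) d = count (mset (cdw m)) d"
          using mv by simp_all
        moreover have "count (mset v) c = i" "count (mset v) d = j" using ij(2) cd by simp_all
        moreover have "count (mset (cdw m)) c = m" "count (mset (cdw m)) d = m"
          using cdw_count[of m c] cdw_count[of m d] cd by simp_all
        ultimately have "i = m" "j = m" by simp_all
        then show ?thesis using ij(1) \<open>w = u\<close> by blast
      next
        assume "(u, v) \<in> R1"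
        then show ?thesis unfolding R1_def using \<open>w = u\<close> by blast
      qed
    qed
    obtain N where pN: "pump L' N" using regular_pump[OF L'(1)] by blast
    have "trace A D (replicate N a @ replicate N b) \<in> rel_preimage RR K"
    proof -
      have "(replicate N a @ replicate N b, replicate N c @ replicate N d) \<in> Rw"
        unfolding Rw_def R0_def by blast
      then have i1: "(trace A D (replicate N a @ replicate N b), trace A D (replicate N c @ replicate N d)) \<in> RR"
        unfolding RR_def by blast
      have "trace A D (replicate N c @ replicate N d) = trace A D (cdw N)"
        using trace_eq_iff[THEN iffD2, OF te_sym[OF cdw_eq[of N]]] .
      then have i2: "trace A D (replicate N c @ replicate N d) \<in> K"
        unfolding K_def Lk_def by blast
      show ?thesis unfolding rel_preimage_def using i1 i2 by blast
    qed
    then obtain w where w: "w \<in> L'" "trace A D (replicate N a @ replicate N b) = trace A D w"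
      using L'(2) by auto
    have "w = replicate N a @ replicate N b" using trab[OF _ w(2)[symmetric]] by (auto simp: set_replicate_conv_if)
    then have wL: "replicate N a @ replicate N b \<in> L'" using w(1) by simp
    have "N \<le> length (replicate N a @ replicate N b)" by simp
    then have "\<exists>x y z. replicate N a @ replicate N b = x @ y @ z \<and> y \<noteq> [] \<and>
        length (x @ y) \<le> N \<and> x @ y @ y @ z \<in> L'"
      using pN wL unfolding pump_def by blast
    then obtain x y z where xyz: "replicate N a @ replicate N b = x @ y @ z" "y \<noteq> []"
        "length (x @ y) \<le> N" "x @ y @ y @ z \<in> L'" by blast
    obtain k where k: "k > 0" "k \<le> N" "\<forall>r. count (mset (x @ y @ y @ z)) r =
       (if r = a then N + k else 0) + (if r = b then N else 0)"
      using pump_contra[OF xyz(1)[symmetric] xyz(2,3)] by blast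
    from inP[OF xyz(4)] show False
    proof
      assume "\<exists>n. x @ y @ y @ z = replicate n a @ replicate n b"
      then obtain n where "x @ y @ y @ z = replicate n a @ replicate n b" by blast
      then have "count (mset (x @ y @ y @ z)) a = n" "count (mset (x @ y @ y @ z)) b = n"
        using ab by auto
      moreover have "count (mset (x @ y @ y @ z)) a = N + k" "count (mset (x @ y @ y @ z)) b = N"
        using k(3) ab by auto
      ultimately show False using k(1) by simp
    next
      assume "\<exists>n. x @ y @ y @ z = replicate n a"
      then obtain n where "x @ y @ y @ z = replicate n a" by blast
      then have z0: "count (mset (x @ y @ y @ z)) b = 0" using ab by auto
      have e: "count (mset (x @ y @ y @ z)) b = N" using k(3)[rule_format, of b] ab by simp
      show False using e z0 k(1,2) by linarith
    qed
  qed
  have G5: "\<not> recognizable_tr A D (rel_image L RR)"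
  proof
    assume "recognizable_tr A D (rel_image L RR)"
    then have W: "regular A {u \<in> lists A. trace A D u \<in> rel_image L RR}"
      unfolding recognizable_tr_def by blast
    define W where "W = {u \<in> lists A. trace A D u \<in> rel_image L RR}"
    have inQ: "\<And>w. w \<in> W \<Longrightarrow> (\<exists>n. mset w = mset (replicate n c)) \<or> (\<exists>n. mset w = mset (cdw n))"
    proof -
      fix w assume "w \<in> W"
      then have "trace A D w \<in> rel_image L RR" unfolding W_def by blast
      then obtain xx where xx: "xx \<in> L" "(xx, trace A D w) \<in> RR" unfolding rel_image_def by blast
      from xx(1) obtain n where n: "xx = trace A D (replicate n a)" unfolding L_def La_def by blast
      from xx(2) obtain u v where uv0: "xx = trace A D u" "trace A D w = trace A D v" "(u, v) \<in> Rw"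
        unfolding RR_def by blast
      have uv: "trace A D (replicate n a) = trace A D u" "trace A D w = trace A D v" "(u, v) \<in> Rw"
        using uv0 n by simp_all
      have ru: "replicate n a = u" using trab[OF Rw_ab[OF uv(3)] uv(1)] .
      have "trace_eq A D w v" using uv(2) by (simp add: trace_eq_iff)
      then have mv: "mset w = mset v" by (rule te_mset)
      show "(\<exists>n. mset w = mset (replicate n c)) \<or> (\<exists>n. mset w = mset (cdw n))"
        using uv(3) unfolding Rw_def
      proof
        assume "(u, v) \<in> R0"
        then obtain i j where ij: "u = replicate i a @ replicate j b" "v = replicate i c @ replicate j d"
          unfolding R0_def by blast
        have "count (mset (replicate n a)) b = 0" using ab by simp
        moreover have "count (mset u) b = j" using ij(1) ab by simp
        ultimately have "j = 0" using ru by simp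
        then have "mset w = mset (replicate i c)" using ij(2) mv by simp
        then show ?thesis by blast
      next
        assume "(u, v) \<in> R1"
        then obtain m where "v = cdw m" unfolding R1_def by blast
        then show ?thesis using mv by blast
      qed
    qed
    obtain N where pN: "pump W N" using regular_pump[OF W] unfolding W_def by blast
    have "replicate N c @ replicate N d \<in> W"
    proof -
      have "(replicate N a, cdw N) \<in> Rw" unfolding Rw_def R1_def by blast
      then have i1: "(trace A D (replicate N a), trace A D (cdw N)) \<in> RR" unfolding RR_def by blast
      have i2: "trace A D (replicate N a) \<in> L" unfolding L_def La_def by blast
      have i3: "trace A D (replicate N c @ replicate N d) = trace A D (cdw N)"
        using trace_eq_iff[THEN iffD2, OF te_sym[OF cdw_eq[of N]]] .
      have "trace A D (cdw N) \<in> rel_image L RR"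
        unfolding rel_image_def using i1 i2 by blast
      then have "trace A D (replicate N c @ replicate N d) \<in> rel_image L RR" using i3 by simp
      moreover have "replicate N c @ replicate N d \<in> lists A" using assms(4,5) by auto
      ultimately show ?thesis unfolding W_def by blast
    qed
    moreover have "N \<le> length (replicate N c @ replicate N d)" by simp
    ultimately have "\<exists>x y z. replicate N c @ replicate N d = x @ y @ z \<and> y \<noteq> [] \<and>
        length (x @ y) \<le> N \<and> x @ y @ y @ z \<in> W"
      using pN unfolding pump_def by blast
    then obtain x y z where xyz: "replicate N c @ replicate N d = x @ y @ z" "y \<noteq> []"
        "length (x @ y) \<le> N" "x @ y @ y @ z \<in> W" by blast
    obtain k where k: "k > 0" "k \<le> N" "\<forall>r. count (mset (x @ y @ y @ z)) r =
       (if r = c then N + k else 0) + (if r = d then N else 0)"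
      using pump_contra[OF xyz(1)[symmetric] xyz(2,3)] by blast
    have ec: "count (mset (x @ y @ y @ z)) c = N + k" using k(3)[rule_format, of c] cd by simp
    have ed: "count (mset (x @ y @ y @ z)) d = N" using k(3)[rule_format, of d] cd by simp
    from inQ[OF xyz(4)] show False
    proof
      assume "\<exists>n. mset (x @ y @ y @ z) = mset (replicate n c)"
      then obtain n where "mset (x @ y @ y @ z) = mset (replicate n c)" by blast
      then have "count (mset (x @ y @ y @ z)) d = 0" using cd by simp
      then show False using ed k(1,2) by linarith
    next
      assume "\<exists>n. mset (x @ y @ y @ z) = mset (cdw n)"
      then obtain n where h: "mset (x @ y @ y @ z) = mset (cdw n)" by blast
      have "count (mset (cdw n)) c = n" "count (mset (cdw n)) d = n"
        using cdw_count[of n c] cdw_count[of n d] cd by simp_all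
      then have "count (mset (x @ y @ y @ z)) c = n" "count (mset (x @ y @ y @ z)) d = n"
        using h by simp_all
      then show False using ec ed k(1) by linarith
    qed
  qed
  show ?thesis using G1 G2 G3 G4 G5 by blast
qed

end
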